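(* In the binary-action global game described in the context, for every $\beta\in\Delta(T)$: $\bigvee\mathcal{S}(\beta)=1$ if and only if $\beta\in\mathrm{C}_{1-x}(\Delta(T))$; and $\bigwedge\mathcal{S}(\beta)=0$ if and only if $\beta\in\mathrm{C}_{x}(\Delta(T))$.
   Context: Game: a single (trivial) characteristic, so the population is described only by beliefs; actions $A=\{0,1\}$ ("noninvest", "invest") ordered by $1\succeq 0$, all available to everyone; states of nature $S=[-1,2]$; payoff $v(a,s,\vartheta)=a\,(s+\vartheta-1)$ where $\vartheta$ is the fraction of the population playing $1$. A type space $(T,\sigma,\tau)$ consists of a nonempty compact metrizable $T$, a continuous $\sigma:T\to S$, and a continuous $\tau:T\to\Delta(\Delta(T))$ (population distribution of beliefs); $\Delta(\cdot)$ denotes Borel probability measures with the weak topology. Interim correlated rationalizability: $\mathcal{S}_0(\beta)=A$; given $\mathcal{S}_m:\Delta(T)\to 2^A$, let $\mathcal{D}_m(t)$ be the set of $\kappa\in\Delta(\Delta(T)\times A)$ with $\Delta(T)$-marginal $\tau(t)$ and $\kappa(\operatorname{graph}\mathcal{S}_m)=1$; $\mathcal{S}_{m+1}(\beta)$ is the set of $a\in A$ such that some $\mu\in\Delta(T\times\Delta(\Delta(T)\times A))$ with $T$-marginal $\beta$ and $\mu(\operatorname{graph}\mathcal{D}_m)=1$ has $a\in\operatorname{argmax}_{a'\in A}\int a'(\sigma(t)+\kappa(\Delta(T)\times\{1\})-1)\,\mathrm d\mu(t,\kappa)$; $\mathcal{S}=\bigcap_m\mathcal{S}_m$. $\bigvee\mathcal{S}(\beta)=\max\mathcal{S}(\beta)$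 and $\bigwedge\mathcal{S}(\beta)=\min\mathcal{S}(\beta)$. Notation: $x_\beta=x(\beta)=\int\sigma\,\mathrm d\beta$; for Borel $E\subseteq\Delta(T)$, $\mathrm{F}_\beta(E)=\int\tau(t)(E)\,\mathrm d\beta(t)$. For measurable $f:\Delta(T)\to\mathbb{R}$, $\mathrm{B}_f(E)=\{\beta\in E:\mathrm{F}_\beta(E)\ge f(\beta)\}$, $\mathrm{B}_f^1=\mathrm{B}_f$, $\mathrm{B}_f^{n+1}(E)=\mathrm{B}_f(\mathrm{B}_f^n(E))$, and $\mathrm{C}_f(E)=\bigcap_n\mathrm{B}_f^n(E)$; here $1-x$ and $x$ denote the functions $\beta\mapsto1-x_\beta$ and $\beta\mapsto x_\beta$. *)

theory Defs
  imports "HOL-Probability.Probability"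
begin

text \<open>The type variable 't is the compact metrizable space T (compactness is an
assumption of the theorem).
The measurable structure on Delta(T) is that of prob_algebra (generated by the
evaluation maps), which coincides with the Borel sigma-algebra of the weak topology
since T is Polish.\<close>

definition DeltaT :: "'t::topological_space measure set" where
  "DeltaT = space (prob_algebra (borel :: 't measure))"

text \<open>Action set A = {0,1} (0 = noninvest, 1 = invest).\<close>
definition Act :: "real set" where
  "Act = {0, 1}"

definition DTA :: "('t::topological_space measure \<times> real) measure" where
  "DTA = prob_algebra (borel :: 't measure) \<Otimes>\<^sub>M count_space Act"

definition payoff :: "real \<Rightarrow> real \<Rightarrow> real \<Rightarrow> real" where
  "payoff a s \<theta> = a * (s + \<theta> - 1)"

definition wconv :: "('a \<Rightarrow> real) set \<Rightarrow> (nat \<Rightarrow> 'a measure) \<Rightarrow> 'a measure \<Rightarrow> bool" where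
  "wconv Cb \<mu>s \<mu> \<longleftrightarrow> (\<forall>f\<in>Cb. (\<lambda>n. \<integral>x. f x \<partial>(\<mu>s n)) \<longlonglongrightarrow> (\<integral>x. f x \<partial>\<mu>))"

definition CbT :: "('t::topological_space \<Rightarrow> real) set" where
  "CbT = {f. continuous_on UNIV f \<and> bounded (range f)}"

text \<open>Bounded continuous real functions on Delta(T) with the weak topology
(Delta(T) is metrizable, so continuity is sequential continuity).\<close>
definition CbDelta :: "('t::topological_space measure \<Rightarrow> real) set" where
  "CbDelta = {g. bounded (g ` DeltaT) \<and>
     (\<forall>\<beta>s \<beta>. (\<forall>n. \<beta>s n \<in> DeltaT) \<and> \<beta> \<in> DeltaT \<and> wconv CbT \<beta>s \<beta>
              \<longrightarrow> (\<lambda>n. g (\<beta>s n)) \<longlonglongrightarrow> g \<beta>)}"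

text \<open>Type space: sigma : T -> S = [-1,2] continuous, tau : T -> Delta(Delta(T)) continuous
(T is metrizable, so continuity is sequential continuity; convergence in the weak
topology of Delta(Delta(T)) is convergence of integrals of bounded continuous functions).\<close>
definition type_space :: "('t::metric_space \<Rightarrow> real) \<Rightarrow> ('t \<Rightarrow> 't measure measure) \<Rightarrow> bool" where
  "type_space \<sigma> \<tau> \<longleftrightarrow>
     compact (UNIV :: 't set) \<and>
     continuous_on UNIV \<sigma> \<and> (\<forall>t. \<sigma> t \<in> {-1..2}) \<and>
     (\<forall>t. \<tau> t \<in> space (prob_algebra (prob_algebra (borel :: 't measure)))) \<and>
     (\<forall>ts t. ts \<longlonglongrightarrow> t \<longrightarrow> wconv CbDelta (\<lambda>n. \<tau> (ts n)) (\<tau> t))"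

definition Dset :: "('t::topological_space \<Rightarrow> 't measure measure)
      \<Rightarrow> ('t measure \<Rightarrow> real set) \<Rightarrow> 't \<Rightarrow> ('t measure \<times> real) measure set" where
  "Dset \<tau> Sm t = {\<kappa> \<in> space (prob_algebra DTA).
      distr \<kappa> (prob_algebra borel) fst = \<tau> t \<and>
      (AE p in \<kappa>. snd p \<in> Sm (fst p))}"

definition Sstep :: "('t::topological_space \<Rightarrow> real) \<Rightarrow> ('t \<Rightarrow> 't measure measure)
      \<Rightarrow> ('t measure \<Rightarrow> real set) \<Rightarrow> 't measure \<Rightarrow> real set" where
  "Sstep \<sigma> \<tau> Sm \<beta> = {a \<in> Act. \<exists>\<mu> \<in> space (prob_algebra (borel \<Otimes>\<^sub>M prob_algebra DTA)).
      distr \<mu> borel fst = \<beta> \<and>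
      (AE p in \<mu>. snd p \<in> Dset \<tau> Sm (fst p)) \<and>
      (\<forall>a'\<in>Act.
         (\<integral>p. payoff a' (\<sigma> (fst p)) (measure (snd p) (DeltaT \<times> {1})) \<partial>\<mu>)
           \<le> (\<integral>p. payoff a (\<sigma> (fst p)) (measure (snd p) (DeltaT \<times> {1})) \<partial>\<mu>))}"

primrec Sm :: "('t::topological_space \<Rightarrow> real) \<Rightarrow> ('t \<Rightarrow> 't measure measure)
      \<Rightarrow> nat \<Rightarrow> 't measure \<Rightarrow> real set" where
  "Sm \<sigma> \<tau> 0 = (\<lambda>\<beta>. Act)"
| "Sm \<sigma> \<tau> (Suc m) = Sstep \<sigma> \<tau> (Sm \<sigma> \<tau> m)"

definition Srat :: "('t::topological_space \<Rightarrow> real) \<Rightarrow> ('t \<Rightarrow> 't measure measure)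
      \<Rightarrow> 't measure \<Rightarrow> real set" where
  "Srat \<sigma> \<tau> \<beta> = (\<Inter>m. Sm \<sigma> \<tau> m \<beta>)"

definition xb :: "('t::topological_space \<Rightarrow> real) \<Rightarrow> 't measure \<Rightarrow> real" where
  "xb \<sigma> \<beta> = (\<integral>t. \<sigma> t \<partial>\<beta>)"

definition Fb :: "('t::topological_space \<Rightarrow> 't measure measure) \<Rightarrow> 't measure
      \<Rightarrow> 't measure set \<Rightarrow> real" where
  "Fb \<tau> \<beta> E = (\<integral>t. measure (\<tau> t) E \<partial>\<beta>)"

definition Bop :: "('t::topological_space \<Rightarrow> 't measure measure) \<Rightarrow> ('t measure \<Rightarrow> real)
      \<Rightarrow> 't measure set \<Rightarrow> 't measure set" where
  "Bop \<tau> f E = {\<beta> \<in> E. Fb \<tau> \<beta> E \<ge> f \<beta>}"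

definition Cop :: "('t::topological_space \<Rightarrow> 't measure measure) \<Rightarrow> ('t measure \<Rightarrow> real)
      \<Rightarrow> 't measure set \<Rightarrow> 't measure set" where
  "Cop \<tau> f E = (\<Inter>n. (Bop \<tau> f ^^ Suc n) E)"

end

theory Submission
  imports Defs
begin


lemma compact_dense_seq:
  assumes "compact (UNIV :: 'a::metric_space set)"
  shows "\<exists>d::nat \<Rightarrow> 'a. \<forall>x e. e > 0 \<longrightarrow> (\<exists>i. dist x (d i) < e)"
proof -
  have "\<exists>F. finite F \<and> (UNIV::'a set) \<subseteq> (\<Union>c\<in>F. ball c (1 / Suc n))" for n :: nat
  proof -
    show ?thesis
    proof (rule compactE_image[OF assms, of UNIV "\<lambda>c. ball c (1 / Suc n)"])
      show "UNIV \<subseteq> (\<Union>c\<in>(UNIV::'a set). ball c (1 / Suc n))" by auto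
      fix C' :: "'a set" assume "finite C'" "UNIV \<subseteq> (\<Union>c\<in>C'. ball c (1 / Suc n))"
      then show ?thesis by (intro exI[of _ C']) simp
    qed simp
  qed
  then obtain F :: "nat \<Rightarrow> 'a set" where F: "\<And>n. finite (F n)" "\<And>n. UNIV \<subseteq> (\<Union>c\<in>F n. ball c (1 / Suc n))"
    by metis
  define D where "D = (\<Union>n. F n)"
  have cD: "countable D" unfolding D_def using F(1) by (auto intro: countable_finite)
  obtain x0 :: 'a where True by auto
  have "x0 \<in> (\<Union>c\<in>F 0. ball c (1 / Suc 0))" using F(2)[of 0] by blast
  then have neD: "D \<noteq> {}" unfolding D_def by auto
  define d where "d = from_nat_into D"
  have "\<exists>i. dist x (d i) < e" if e: "e > 0" for x e
  proof -
    obtain n :: nat where n: "1 / Suc n < e"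
      using nat_approx_posE[OF e] by metis
    obtain c where c: "c \<in> F n" "x \<in> ball c (1 / Suc n)" using subsetD[OF F(2)[of n] UNIV_I, of x] by blast
    have "c \<in> D" using c unfolding D_def by auto
    then obtain i where "from_nat_into D i = c" using from_nat_into_surj[OF cD] by blast
    then have "dist x (d i) < e" using c n unfolding d_def by (auto simp: dist_commute)
    then show ?thesis by blast
  qed
  then show ?thesis by blast
qed

definition dseq :: "nat \<Rightarrow> 'a::metric_space" where
  "dseq = (SOME d. \<forall>x e. e > 0 \<longrightarrow> (\<exists>i. dist x (d i) < e))"

lemma dseq_dense:
  assumes "compact (UNIV :: 'a::metric_space set)" "e > 0"
  shows "\<exists>i. dist (x::'a) (dseq i) < e"
proof -
  have "\<forall>x e. e > 0 \<longrightarrow> (\<exists>i. dist (x::'a) (dseq i) < e)"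
    unfolding dseq_def by (rule someI_ex[OF compact_dense_seq[OF assms(1)]])
  then show ?thesis using assms(2) by blast
qed

definition cb :: "(nat \<times> rat) list \<Rightarrow> 'a::metric_space set" where
  "cb l = (\<Inter>p\<in>set l. cball (dseq (fst p)) (real_of_rat (snd p)))"

lemma closed_cb: "closed (cb l)"
  unfolding cb_def by auto

lemma cb_append: "cb (l @ l') = cb l \<inter> cb l'"
  unfolding cb_def by auto

lemma Int_stable_cb: "Int_stable (range cb)"
  unfolding Int_stable_def by (auto simp: cb_append[symmetric])

lemma borel_cb:
  assumes "compact (UNIV :: 'a::metric_space set)"
  shows "borel = sigma (UNIV::'a set) (range cb)"
proof (rule borel_eq_sigmaI1[OF borel_def, where F=cb and A=UNIV])
  show "cb l \<in> sets borel" for l using closed_cb by (rule borel_closed)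
  fix U :: "'a set" assume "U \<in> Collect open"
  then have U: "open U" by simp
  define K where "K = {p::nat\<times>rat. cball (dseq (fst p)) (real_of_rat (snd p)) \<subseteq> U}"
  have eq: "U = (\<Union>p\<in>K. cb [p])"
  proof
    show "(\<Union>p\<in>K. cb [p]) \<subseteq> U" unfolding K_def cb_def by auto
    show "U \<subseteq> (\<Union>p\<in>K. cb [p])"
    proof
      fix x assume "x \<in> U"
      then obtain e where e: "e > 0" "ball x e \<subseteq> U" using U open_contains_ball by blast
      obtain i where i: "dist x (dseq i) < e / 3" using dseq_dense[OF assms, of "e/3" x] e by auto
      obtain r where r: "r \<in> \<rat>" "e / 3 < r" "r < 2 * e / 3"
        using Rats_dense_in_real[of "e/3" "2*e/3"] e by auto
      obtain q where q: "r = real_of_rat q" using r(1) Rats_cases by blast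
      have "cball (dseq i) r \<subseteq> ball x e"
      proof
        fix y :: 'a assume "y \<in> cball (dseq i) r"
        then have "dist (dseq i) y \<le> r" by simp
        moreover have "dist x y \<le> dist x (dseq i) + dist (dseq i) y" by (rule dist_triangle)
        ultimately show "y \<in> ball x e" using i r by simp
      qed
      then have "(i, q) \<in> K" unfolding K_def using e r q by auto
      moreover have "x \<in> cb [(i,q)]" unfolding cb_def using i r q by (auto simp: dist_commute)
      ultimately show "x \<in> (\<Union>p\<in>K. cb [p])" by blast
    qed
  qed
  have "countable K" by simp
  then show "U \<in> sets (sigma UNIV (range cb))"
    unfolding eq by (intro sets.countable_UN') auto
qed

lemma sets_borel_cb:
  assumes "compact (UNIV :: 'a::metric_space set)"
  shows "sets (borel::'a measure) = sigma_sets UNIV (range cb)"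
proof -
  have "sets (borel::'a measure) = sets (sigma UNIV (range (cb::_ \<Rightarrow> 'a set)))"
    using borel_cb[OF assms] by (rule arg_cong)
  also have "\<dots> = sigma_sets UNIV (range cb)" by (rule sets_measure_of) simp
  finally show ?thesis .
qed



definition fA :: "'a::metric_space set \<Rightarrow> nat \<Rightarrow> 'a \<Rightarrow> real" where
  "fA A n x = (if A = {} then 0 else max 0 (1 - real n * infdist x A))"

lemma fA_bounds: "0 \<le> fA A n x" "fA A n x \<le> 1"
  unfolding fA_def by (auto simp: infdist_nonneg)

lemma fA_cont: "continuous_on UNIV (fA A n)"
  unfolding fA_def by (cases "A = {}") (auto intro!: continuous_intros)

lemma fA_CbT: "fA A n \<in> CbT"
  unfolding CbT_def using fA_bounds[of A n]
  by (auto intro!: fA_cont bounded_real[THEN iffD2] exI[of _ 1])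

lemma fA_meas[measurable]: "fA A n \<in> borel_measurable borel"
  by (rule borel_measurable_continuous_onI[OF fA_cont])

lemma fA_lim:
  assumes "closed A"
  shows "(\<lambda>n. fA A n x) \<longlonglongrightarrow> indicator A x"
proof (cases "A = {}")
  case True then show ?thesis by (simp add: fA_def)
next
  case False
  show ?thesis
  proof (cases "x \<in> A")
    case True
    then have "infdist x A = 0" by simp
    then show ?thesis using True False by (simp add: fA_def)
  next
    case xn: False
    then have d: "infdist x A > 0"
      using in_closed_iff_infdist_zero[OF assms False, of x] infdist_nonneg[of x A] xn by auto
    obtain N :: nat where N: "1 < real N * infdist x A"
      using ex_less_of_nat_mult[OF d] by auto
    have "eventually (\<lambda>n. fA A n x = 0) sequentially"
      unfolding eventually_sequentially
    proof (intro exI[of _ N] allI impI)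
      fix n assume "N \<le> n"
      then have "real N * infdist x A \<le> real n * infdist x A"
        using d by (intro mult_right_mono) auto
      then show "fA A n x = 0" using N False unfolding fA_def by auto
    qed
    then have "(\<lambda>n. fA A n x) \<longlonglongrightarrow> 0" by (rule tendsto_eventually)
    then show ?thesis using xn by simp
  qed
qed

lemma integral_fA_lim:
  assumes "closed A" "prob_space \<gamma>" "sets \<gamma> = sets borel"
  shows "(\<lambda>n. \<integral>x. fA A n x \<partial>\<gamma>) \<longlonglongrightarrow> measure \<gamma> A"
proof -
  interpret prob_space \<gamma> by fact
  have [measurable_cong]: "sets \<gamma> = sets borel" by fact
  have A: "A \<in> sets \<gamma>" using assms(1,3) by (simp add: borel_closed)
  have "(\<lambda>n. \<integral>x. fA A n x \<partial>\<gamma>) \<longlonglongrightarrow> (\<integral>x. indicator A x \<partial>\<gamma>)"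
  proof (rule integral_dominated_convergence[where w="\<lambda>_. 1"])
    show "AE x in \<gamma>. (\<lambda>n. fA A n x) \<longlonglongrightarrow> indicator A x"
      using fA_lim[OF assms(1)] by simp
    show "AE x in \<gamma>. norm (fA A n x) \<le> 1" for n using fA_bounds[of A n] by simp
  qed (use A in auto)
  also have "(\<integral>x. indicator A x \<partial>\<gamma>) = measure \<gamma> A"
    using A by (simp add: Int_absorb2 sets.sets_into_space)
  finally show ?thesis .
qed



lemma int_meas_prob[measurable]:
  fixes f :: "'a \<Rightarrow> real"
  assumes [measurable]: "f \<in> borel_measurable N"
  shows "(\<lambda>M. \<integral>x. f x \<partial>M) \<in> borel_measurable (prob_algebra N)"
  unfolding prob_algebra_def by (intro measurable_restrict_space1) measurable

lemma space_P: "space (prob_algebra (borel::'a::topological_space measure)) = DeltaT"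
  by (simp add: DeltaT_def)

lemma DeltaT_iff: "\<gamma> \<in> DeltaT \<longleftrightarrow> sets \<gamma> = sets borel \<and> prob_space \<gamma>"
  by (simp add: DeltaT_def space_prob_algebra)

lemma DeltaT_sets: "DeltaT \<in> sets (prob_algebra (borel::'a::topological_space measure))"
  using sets.top[of "prob_algebra (borel::'a measure)"] by (simp add: space_P)

definition phi :: "(nat \<times> rat) list \<Rightarrow> nat \<Rightarrow> 'a::metric_space measure \<Rightarrow> real" where
  "phi l n \<gamma> = (\<integral>x. fA (cb l) n x \<partial>\<gamma>)"

lemma phi_meas[measurable]: "phi l n \<in> borel_measurable (prob_algebra borel)"
  unfolding phi_def by measurable

lemma phi_seq: "wconv CbT \<beta>s \<beta> \<Longrightarrow> (\<lambda>k. phi l n (\<beta>s k)) \<longlonglongrightarrow> phi l n \<beta>"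
  unfolding wconv_def phi_def using fA_CbT by blast

lemma phi_lim: "\<gamma> \<in> DeltaT \<Longrightarrow> (\<lambda>n. phi l n \<gamma>) \<longlonglongrightarrow> measure \<gamma> (cb l)"
  unfolding phi_def DeltaT_iff by (intro integral_fA_lim closed_cb) auto

type_synonym gidx = "((nat \<times> rat) list \<times> nat) \<times> rat"

primrec gfun :: "gidx list \<Rightarrow> 'a::metric_space measure \<Rightarrow> real" where
  "gfun [] = (\<lambda>\<gamma>. -1)"
| "gfun (k # L) = (\<lambda>\<gamma>. max (phi (fst (fst k)) (snd (fst k)) \<gamma> - real_of_rat (snd k)) (gfun L \<gamma>))"

definition genset :: "gidx list \<Rightarrow> 'a::metric_space measure set" where
  "genset L = {\<gamma> \<in> DeltaT. gfun L \<gamma> \<le> 0}"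

lemma gfun_meas[measurable]: "gfun L \<in> borel_measurable (prob_algebra borel)"
  by (induction L) auto

lemma gfun_seq: "wconv CbT \<beta>s \<beta> \<Longrightarrow> (\<lambda>k. gfun L (\<beta>s k)) \<longlonglongrightarrow> gfun L \<beta>"
  by (induction L) (auto intro!: tendsto_intros phi_seq)

lemma gfun_append: "gfun (L @ L') \<gamma> \<le> 0 \<longleftrightarrow> gfun L \<gamma> \<le> 0 \<and> gfun L' \<gamma> \<le> 0"
  by (induction L) auto

lemma genset_append: "genset (L @ L') = genset L \<inter> genset L'"
  unfolding genset_def using gfun_append by blast

lemma Int_stable_genset: "Int_stable (range genset)"
  unfolding Int_stable_def by (auto simp: genset_append[symmetric])

lemma genset_Nil: "genset [] = DeltaT"
  unfolding genset_def by simp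

lemma genset_sub: "range genset \<subseteq> Pow DeltaT"
  unfolding genset_def by auto

lemma genset_sets: "genset L \<in> sets (prob_algebra borel)"
proof -
  have "genset L = {\<gamma> \<in> space (prob_algebra borel). gfun L \<gamma> \<le> 0}"
    unfolding genset_def space_P ..
  also have "\<dots> \<in> sets (prob_algebra borel)" by measurable
  finally show ?thesis .
qed

lemma genset_single: "genset [((l, n), q)] = {\<gamma> \<in> DeltaT. phi l n \<gamma> \<le> real_of_rat q}"
  unfolding genset_def by auto

lemma sets_P_genset:
  assumes "compact (UNIV :: 'a::metric_space set)"
  shows "sets (prob_algebra (borel :: 'a measure)) = sigma_sets DeltaT (range genset)"
proof
  show "sigma_sets DeltaT (range genset) \<subseteq> sets (prob_algebra (borel :: 'a measure))"
    by (rule sets.sigma_sets_subset'[of _ "prob_algebra borel", unfolded space_P])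
      (auto simp: genset_sets DeltaT_sets)
next
  define Q :: "'a measure measure" where "Q = sigma DeltaT (range genset)"
  have spQ: "space Q = DeltaT" unfolding Q_def using genset_sub by (simp add: space_measure_of_conv)
  have sQ: "sets Q = sigma_sets DeltaT (range genset)" unfolding Q_def using genset_sub by (rule sets_measure_of)
  have phiQ: "phi l n \<in> borel_measurable Q" for l n
  proof (subst borel_measurable_iff_le, intro allI)
    fix a :: real
    define I where "I = {q::rat. a < real_of_rat q}"
    have "I \<noteq> {}"
    proof -
      obtain r where "r \<in> \<rat>" "a < r" "r < a + 1" using Rats_dense_in_real[of a "a+1"] by auto
      then show ?thesis unfolding I_def by (auto elim!: Rats_cases)
    qed
    have eq: "{w \<in> space Q. phi l n w \<le> a} = (\<Inter>q\<in>I. genset [((l, n), q)])"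
    proof (intro set_eqI iffI)
      fix w :: "'a measure" assume "w \<in> (\<Inter>q\<in>I. genset [((l, n), q)])"
      then have w: "w \<in> DeltaT" "\<And>q. a < real_of_rat q \<Longrightarrow> phi l n w \<le> real_of_rat q"
        using \<open>I \<noteq> {}\<close> unfolding genset_single I_def by auto
      have "phi l n w \<le> a"
      proof (rule ccontr)
        assume "\<not> phi l n w \<le> a"
        then obtain r where "r \<in> \<rat>" "a < r" "r < phi l n w"
          using Rats_dense_in_real[of a "phi l n w"] by auto
        then show False using w(2) by (auto elim!: Rats_cases) (meson not_le)
      qed
      then show "w \<in> {w \<in> space Q. phi l n w \<le> a}" using w spQ by auto
    qed (auto simp: genset_single I_def spQ)
    show "{w \<in> space Q. phi l n w \<le> a} \<in> sets Q"
      unfolding eq sQ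
      by (rule sigma_algebra.countable_INT'[OF sigma_algebra_sigma_sets[OF genset_sub]])
         (use \<open>I \<noteq> {}\<close> in auto)
  qed
  have idQ: "(\<lambda>x. x) \<in> Q \<rightarrow>\<^sub>M prob_algebra borel"
  proof (rule measurable_prob_algebra_generated[where \<Omega>=UNIV and G="range cb"])
    show "sets (borel::'a measure) = sigma_sets UNIV (range (cb::_ \<Rightarrow> 'a set))"
      by (rule sets_borel_cb[OF assms])
    show "Int_stable (range cb)" by (rule Int_stable_cb)
    show "range cb \<subseteq> Pow UNIV" by simp
    show "prob_space a" "sets a = sets borel" if "a \<in> space Q" for a
      using that unfolding spQ DeltaT_iff by auto
    fix A :: "'a set" assume "A \<in> range cb"
    then obtain l where A: "A = cb l" by auto
    have "(\<lambda>\<gamma>. measure \<gamma> (cb l)) \<in> borel_measurable Q"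
      by (rule borel_measurable_LIMSEQ_real[OF _ phiQ]) (use phi_lim spQ in auto)
    then have "(\<lambda>\<gamma>. ennreal (measure \<gamma> (cb l))) \<in> borel_measurable Q" by measurable
    then show "(\<lambda>\<gamma>. emeasure \<gamma> A) \<in> borel_measurable Q"
      unfolding A
    proof (rule measurable_cong[THEN iffD1, rotated])
      fix \<gamma> assume "\<gamma> \<in> space Q"
      then have "prob_space \<gamma>" unfolding spQ DeltaT_iff by auto
      then show "ennreal (measure \<gamma> (cb l)) = emeasure \<gamma> (cb l)"
        by (simp add: finite_measure.emeasure_eq_measure prob_space.finite_measure)
    qed
  qed
  show "sets (prob_algebra (borel :: 'a measure)) \<subseteq> sigma_sets DeltaT (range genset)"
  proof
    fix E assume E: "E \<in> sets (prob_algebra (borel :: 'a measure))"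
    have "(\<lambda>x. x) -` E \<inter> space Q \<in> sets Q" by (rule measurable_sets[OF idQ E])
    moreover have "(\<lambda>x. x) -` E \<inter> space Q = E"
      using sets.sets_into_space[OF E] unfolding spQ space_P by auto
    ultimately show "E \<in> sigma_sets DeltaT (range genset)" using sQ by simp
  qed
qed



definition hfun :: "gidx list \<Rightarrow> nat \<Rightarrow> 'a::metric_space measure \<Rightarrow> real" where
  "hfun L n \<gamma> = min 1 (max 0 (1 - real n * gfun L \<gamma>))"

lemma hfun_meas[measurable]: "hfun L n \<in> borel_measurable (prob_algebra borel)"
  unfolding hfun_def by measurable

lemma hfun_CbDelta: "hfun L n \<in> (CbDelta :: ('a::metric_space measure \<Rightarrow> real) set)"
  unfolding CbDelta_def
proof (intro CollectI conjI allI impI)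
  show "bounded (hfun L n ` DeltaT)"
    unfolding bounded_real by (intro exI[of _ 1]) (auto simp: hfun_def)
  fix \<beta>s :: "nat \<Rightarrow> 'a measure" and \<beta> assume "(\<forall>n. \<beta>s n \<in> DeltaT) \<and> \<beta> \<in> DeltaT \<and> wconv CbT \<beta>s \<beta>"
  then have "wconv CbT \<beta>s \<beta>" by blast
  then show "(\<lambda>k. hfun L n (\<beta>s k)) \<longlonglongrightarrow> hfun L n \<beta>"
    unfolding hfun_def by (intro tendsto_intros gfun_seq)
qed

lemma hfun_lim: "\<gamma> \<in> DeltaT \<Longrightarrow> (\<lambda>n. hfun L n \<gamma>) \<longlonglongrightarrow> indicator (genset L) \<gamma>"
proof (cases "gfun L \<gamma> \<le> 0")
  case True
  assume "\<gamma> \<in> DeltaT"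
  have "hfun L n \<gamma> = 1" for n
  proof -
    have "real n * gfun L \<gamma> \<le> 0" using True by (simp add: mult_nonneg_nonpos)
    then show ?thesis unfolding hfun_def by simp
  qed
  then show ?thesis using True \<open>\<gamma> \<in> DeltaT\<close> by (simp add: genset_def)
next
  case False
  assume "\<gamma> \<in> DeltaT"
  then have g: "gfun L \<gamma> > 0" using False by simp
  obtain N :: nat where N: "1 < real N * gfun L \<gamma>"
    using ex_less_of_nat_mult[OF g] by auto
  have "eventually (\<lambda>n. hfun L n \<gamma> = 0) sequentially"
    unfolding eventually_sequentially
  proof (intro exI[of _ N] allI impI)
    fix n assume "N \<le> n"
    then have "real N * gfun L \<gamma> \<le> real n * gfun L \<gamma>"
      using g by (intro mult_right_mono) auto
    then show "hfun L n \<gamma> = 0" using N unfolding hfun_def by auto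
  qed
  then have "(\<lambda>n. hfun L n \<gamma>) \<longlonglongrightarrow> 0" by (rule tendsto_eventually)
  then show ?thesis using False by (simp add: genset_def)
qed

lemma type_spaceD:
  assumes "type_space \<sigma> \<tau>"
  shows "compact (UNIV::'t::metric_space set)" "continuous_on UNIV \<sigma>" "\<And>t. \<sigma> t \<in> {-1..2}"
    "\<And>t. \<tau> t \<in> space (prob_algebra (prob_algebra (borel :: 't measure)))"
    "\<And>ts t. ts \<longlonglongrightarrow> t \<Longrightarrow> wconv CbDelta (\<lambda>n. \<tau> (ts n)) (\<tau> t)"
  using assms unfolding type_space_def by auto

lemma tau_meas:
  fixes \<sigma> :: "'t::metric_space \<Rightarrow> real" and \<tau> :: "'t \<Rightarrow> 't measure measure"
  assumes ts: "type_space \<sigma> \<tau>"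
  shows "\<tau> \<in> borel \<rightarrow>\<^sub>M prob_algebra (prob_algebra borel)"
proof (rule measurable_prob_algebra_generated[where \<Omega>=DeltaT and G="range genset"])
  note D = type_spaceD[OF ts]
  have tsp: "sets (\<tau> t) = sets (prob_algebra borel)" "prob_space (\<tau> t)" for t
    using D(4)[of t] by (auto simp: space_prob_algebra)
  show "sets (prob_algebra (borel::'t measure)) = sigma_sets DeltaT (range genset)"
    by (rule sets_P_genset[OF D(1)])
  show "Int_stable (range genset)" by (rule Int_stable_genset)
  show "range genset \<subseteq> Pow DeltaT" by (rule genset_sub)
  show "prob_space (\<tau> a)" "sets (\<tau> a) = sets (prob_algebra borel)" for a by (rule tsp)+
  fix A :: "'t measure set" assume "A \<in> range genset"
  then obtain L where A: "A = genset L" by auto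
  have cont: "(\<lambda>t. \<integral>\<gamma>. hfun L n \<gamma> \<partial>\<tau> t) \<in> borel_measurable borel" for n
  proof (rule borel_measurable_continuous_onI, rule continuous_on_sequentiallyI)
    fix u :: "nat \<Rightarrow> 't" and a assume "u \<longlonglongrightarrow> a"
    then have "wconv CbDelta (\<lambda>k. \<tau> (u k)) (\<tau> a)" by (rule D(5))
    then show "(\<lambda>k. \<integral>\<gamma>. hfun L n \<gamma> \<partial>\<tau> (u k)) \<longlonglongrightarrow> (\<integral>\<gamma>. hfun L n \<gamma> \<partial>\<tau> a)"
      unfolding wconv_def using hfun_CbDelta by blast
  qed
  have lim: "(\<lambda>n. \<integral>\<gamma>. hfun L n \<gamma> \<partial>\<tau> t) \<longlonglongrightarrow> measure (\<tau> t) (genset L)" for t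
  proof -
    interpret prob_space "\<tau> t" by (rule tsp)
    have [measurable_cong]: "sets (\<tau> t) = sets (prob_algebra borel)" by (rule tsp)
    have sp: "space (\<tau> t) = DeltaT" using sets_eq_imp_space_eq[OF tsp(1)] space_P by simp
    have GS: "genset L \<in> sets (\<tau> t)" using genset_sets tsp(1) by simp
    have "(\<lambda>n. \<integral>\<gamma>. hfun L n \<gamma> \<partial>\<tau> t) \<longlonglongrightarrow> (\<integral>\<gamma>. indicator (genset L) \<gamma> \<partial>\<tau> t)"
    proof (rule integral_dominated_convergence[where w="\<lambda>_. 1"])
      show "AE x in \<tau> t. (\<lambda>n. hfun L n x) \<longlonglongrightarrow> indicator (genset L) x"
        by (rule AE_I2) (use hfun_lim sp in auto)
      show "AE x in \<tau> t. norm (hfun L n x) \<le> 1" for n by (simp add: hfun_def)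
    qed (use GS in auto)
    also have "(\<integral>\<gamma>. indicator (genset L) \<gamma> \<partial>\<tau> t) = measure (\<tau> t) (genset L)"
      using GS by (simp add: Int_absorb2 sets.sets_into_space)
    finally show ?thesis .
  qed
  have "(\<lambda>t. measure (\<tau> t) (genset L)) \<in> borel_measurable borel"
    by (rule borel_measurable_LIMSEQ_real[OF _ cont]) (use lim in auto)
  then have "(\<lambda>t. ennreal (measure (\<tau> t) (genset L))) \<in> borel_measurable borel" by measurable
  then show "(\<lambda>t. emeasure (\<tau> t) A) \<in> borel_measurable borel"
    unfolding A using tsp(2)
    by (simp add: finite_measure.emeasure_eq_measure prob_space.finite_measure)
qed



lemma P_eq:
  assumes "compact (UNIV :: 'a::metric_space set)"
    and n1: "\<nu>1 \<in> space (prob_algebra (prob_algebra (borel :: 'a measure)))"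
    and n2: "\<nu>2 \<in> space (prob_algebra (prob_algebra (borel :: 'a measure)))"
    and eq: "\<And>L. measure \<nu>1 (genset L) = measure \<nu>2 (genset L)"
  shows "\<nu>1 = \<nu>2"
proof (rule measure_eqI_generator_eq[where E="range genset" and \<Omega>=DeltaT and A="\<lambda>_. DeltaT"])
  have p1: "prob_space \<nu>1" "sets \<nu>1 = sets (prob_algebra borel)" using n1 by (auto simp: space_prob_algebra)
  have p2: "prob_space \<nu>2" "sets \<nu>2 = sets (prob_algebra borel)" using n2 by (auto simp: space_prob_algebra)
  show "Int_stable (range genset)" by (rule Int_stable_genset)
  show "range genset \<subseteq> Pow DeltaT" by (rule genset_sub)
  show "sets \<nu>1 = sigma_sets DeltaT (range genset)" "sets \<nu>2 = sigma_sets DeltaT (range genset)"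
    using p1 p2 sets_P_genset[OF assms(1)] by auto
  fix X :: "'a measure set" assume "X \<in> range genset"
  then obtain L where X: "X = genset L" by auto
  show "emeasure \<nu>1 X = emeasure \<nu>2 X"
    using eq[of L] p1 p2 unfolding X
    by (simp add: finite_measure.emeasure_eq_measure prob_space.finite_measure)
next
  show "range (\<lambda>_. DeltaT) \<subseteq> range genset" using genset_Nil[symmetric] by auto
  show "(\<Union>i::nat. DeltaT) = DeltaT" by simp
  have "finite_measure \<nu>1" using n1 by (auto simp: space_prob_algebra intro: prob_space.finite_measure)
  then show "emeasure \<nu>1 DeltaT \<noteq> \<infinity>" for i :: nat using finite_measure.emeasure_finite by (metis infinity_ennreal_def)
qed

lemma graph_tau_sets:
  fixes \<sigma> :: "'t::metric_space \<Rightarrow> real" and \<tau> :: "'t \<Rightarrow> 't measure measure"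
  assumes ts: "type_space \<sigma> \<tau>"
  shows "{p \<in> space (borel \<Otimes>\<^sub>M prob_algebra DTA). distr (snd p) (prob_algebra borel) fst = \<tau> (fst p)}
         \<in> sets (borel \<Otimes>\<^sub>M prob_algebra (DTA :: ('t measure \<times> real) measure))"
proof -
  note D = type_spaceD[OF ts]
  have [measurable]: "\<tau> \<in> borel \<rightarrow>\<^sub>M prob_algebra (prob_algebra borel)" by (rule tau_meas[OF ts])
  have GL[measurable]: "genset L \<in> sets (prob_algebra borel)" for L :: "gidx list" by (rule genset_sets)
  have B[measurable]: "fst -` genset L \<inter> space DTA \<in> sets (DTA :: ('t measure \<times> real) measure)" for L
    unfolding DTA_def by measurable
  let ?N = "borel \<Otimes>\<^sub>M prob_algebra (DTA :: ('t measure \<times> real) measure)"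
  have "{p \<in> space ?N. distr (snd p) (prob_algebra borel) fst = \<tau> (fst p)} =
        {p \<in> space ?N. \<forall>L. measure (snd p) (fst -` genset L \<inter> space DTA) = measure (\<tau> (fst p)) (genset L)}"
  proof (intro Collect_cong conj_cong refl)
    fix p :: "'t \<times> ('t measure \<times> real) measure" assume p: "p \<in> space ?N"
    then have sp: "snd p \<in> space (prob_algebra DTA)" by (auto simp: space_pair_measure)
    then have sp2: "prob_space (snd p)" "sets (snd p) = sets DTA" by (auto simp: space_prob_algebra)
    have fm: "fst \<in> snd p \<rightarrow>\<^sub>M prob_algebra (borel::'t measure)"
      using sp2(2) unfolding DTA_def by (simp cong: measurable_cong_sets)
    have dsp: "distr (snd p) (prob_algebra borel) fst \<in> space (prob_algebra (prob_algebra (borel::'t measure)))"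
      using sp2(1) fm by (auto simp: space_prob_algebra intro: prob_space.prob_space_distr)
    have md: "measure (distr (snd p) (prob_algebra borel) fst) (genset L) =
              measure (snd p) (fst -` genset L \<inter> space DTA)" for L
      using measure_distr[OF fm GL[of L]] sets_eq_imp_space_eq[OF sp2(2)] by simp
    show "(distr (snd p) (prob_algebra borel) fst = \<tau> (fst p)) =
          (\<forall>L. measure (snd p) (fst -` genset L \<inter> space DTA) = measure (\<tau> (fst p)) (genset L))"
    proof
      assume "distr (snd p) (prob_algebra borel) fst = \<tau> (fst p)"
      then show "\<forall>L. measure (snd p) (fst -` genset L \<inter> space DTA) = measure (\<tau> (fst p)) (genset L)"
        using md by metis
    next
      assume "\<forall>L. measure (snd p) (fst -` genset L \<inter> space DTA) = measure (\<tau> (fst p)) (genset L)"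
      then show "distr (snd p) (prob_algebra borel) fst = \<tau> (fst p)"
        using md by (intro P_eq[OF D(1) dsp D(4)]) auto
    qed
  qed
  also have "\<dots> = (\<Inter>L\<in>UNIV. {p \<in> space ?N. measure (snd p) (fst -` genset L \<inter> space DTA) = measure (\<tau> (fst p)) (genset L)})"
    by auto
  also have "\<dots> \<in> sets ?N"
  proof -
    have "{p \<in> space ?N. measure (snd p) (fst -` genset L \<inter> space DTA) = measure (\<tau> (fst p)) (genset L)} \<in> sets ?N" for L :: "gidx list"
    proof -
    have m1: "(\<lambda>p. measure (snd p) (fst -` genset L \<inter> space DTA)) \<in> borel_measurable ?N"
      by (rule measurable_compose[OF measurable_snd measurable_measure_prob_algebra[OF B]])
    have m2: "(\<lambda>p. measure (\<tau> (fst p)) (genset L)) \<in> borel_measurable ?N"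
      by (rule measurable_compose[OF measurable_compose[OF measurable_fst tau_meas[OF ts]] measurable_measure_prob_algebra[OF GL]])
    show ?thesis
      by (rule measurable_equality_set[OF m1 m2])
    qed
    then show ?thesis by (intro sets.countable_INT') auto
  qed
  finally show ?thesis .
qed



lemma space_DTA: "space (DTA :: ('a::topological_space measure \<times> real) measure) = DeltaT \<times> Act"
  by (simp add: DTA_def space_pair_measure space_P)

lemma Act_sets[measurable]: "A \<subseteq> Act \<Longrightarrow> A \<in> sets (count_space Act)" by simp

lemma kappa_bounds:
  fixes \<tau> :: "'t::metric_space \<Rightarrow> 't measure measure"
  assumes ts: "type_space \<sigma> \<tau>"
    and HSb: "\<forall>\<gamma>\<in>DeltaT. S \<gamma> \<subseteq> Act"
    and E1: "E1 = {\<gamma> \<in> DeltaT. 1 \<in> S \<gamma>}" "E1 \<in> sets (prob_algebra borel)"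
    and E0: "E0 = {\<gamma> \<in> DeltaT. 0 \<in> S \<gamma>}" "E0 \<in> sets (prob_algebra borel)"
    and k: "\<kappa> \<in> Dset \<tau> S t"
  shows "measure \<kappa> (DeltaT \<times> {1}) \<le> measure (\<tau> t) E1"
    and "1 - measure (\<tau> t) E0 \<le> measure \<kappa> (DeltaT \<times> {1})"
proof -
  note D = type_spaceD[OF ts]
  have k1: "\<kappa> \<in> space (prob_algebra DTA)" "distr \<kappa> (prob_algebra borel) fst = \<tau> t"
     "AE q in \<kappa>. snd q \<in> S (fst q)" using k unfolding Dset_def by auto
  have ps: "prob_space \<kappa>" and sk: "sets \<kappa> = sets DTA" using k1(1) by (auto simp: space_prob_algebra)
  interpret prob_space \<kappa> by (rule ps)
  have spk: "space \<kappa> = DeltaT \<times> Act" using sets_eq_imp_space_eq[OF sk] space_DTA by simp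
  have tp: "prob_space (\<tau> t)" "sets (\<tau> t) = sets (prob_algebra borel)"
    using D(4)[of t] by (auto simp: space_prob_algebra)
  have spt: "space (\<tau> t) = DeltaT" using sets_eq_imp_space_eq[OF tp(2)] space_P by simp
  have fm: "fst \<in> \<kappa> \<rightarrow>\<^sub>M prob_algebra (borel::'t measure)"
    using sk unfolding DTA_def by (simp cong: measurable_cong_sets)
  have ms: "A \<times> B \<in> sets \<kappa>" if "A \<in> sets (prob_algebra borel)" "B \<subseteq> Act" for A B
    using that unfolding sk DTA_def by (intro pair_measureI) auto
  have DT: "DeltaT \<in> sets (prob_algebra (borel::'t measure))" by (rule DeltaT_sets)
  have marg: "measure \<kappa> (A \<times> Act) = measure (\<tau> t) A" if A: "A \<in> sets (prob_algebra borel)" for A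
  proof -
    have "measure (\<tau> t) A = measure \<kappa> (fst -` A \<inter> space \<kappa>)"
      using measure_distr[OF fm A] k1(2) by simp
    also have "fst -` A \<inter> space \<kappa> = A \<times> Act"
      using sets.sets_into_space[OF A] unfolding spk space_P by auto
    finally show ?thesis by simp
  qed
  have AEk: "AE q in \<kappa>. q \<in> DeltaT \<times> Act \<and> snd q \<in> S (fst q)"
    using k1(3) AE_space[of \<kappa>] by eventually_elim (auto simp: spk)
  have "measure \<kappa> (DeltaT \<times> {1}) = measure \<kappa> (E1 \<times> {1})"
  proof (rule measure_eq_AE[OF eventually_mono[OF AEk]])
    fix q :: "'t measure \<times> real" assume q: "q \<in> DeltaT \<times> Act \<and> snd q \<in> S (fst q)"
    then show "q \<in> DeltaT \<times> {1} \<longleftrightarrow> q \<in> E1 \<times> {1}"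
      using E1(1) by auto
  next
    show "DeltaT \<times> {1} \<in> sets \<kappa>" by (rule ms[OF DT]) (simp add: Act_def)
    show "E1 \<times> {1} \<in> sets \<kappa>" by (rule ms[OF E1(2)]) (simp add: Act_def)
  qed
  also have "\<dots> \<le> measure \<kappa> (E1 \<times> Act)"
    by (rule finite_measure_mono) (auto intro: ms[OF E1(2)] simp: Act_def)
  also have "\<dots> = measure (\<tau> t) E1" by (rule marg[OF E1(2)])
  finally show "measure \<kappa> (DeltaT \<times> {1}) \<le> measure (\<tau> t) E1" .
  have E0D: "DeltaT - E0 \<in> sets (prob_algebra borel)" using E0(2) DT by auto
  have "1 - measure (\<tau> t) E0 = measure (\<tau> t) (DeltaT - E0)"
    using prob_space.prob_space[OF tp(1)] finite_measure.finite_measure_compl[OF prob_space.finite_measure[OF tp(1)], of E0]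
      E0(2) tp(2) spt by simp
  also have "\<dots> = measure \<kappa> ((DeltaT - E0) \<times> Act)" by (rule marg[OF E0D, symmetric])
  also have "\<dots> = measure \<kappa> ((DeltaT - E0) \<times> {1})"
  proof (rule measure_eq_AE[OF eventually_mono[OF AEk]])
    fix q :: "'t measure \<times> real" assume q: "q \<in> DeltaT \<times> Act \<and> snd q \<in> S (fst q)"
    then have "snd q \<in> Act" by auto
    then show "q \<in> (DeltaT - E0) \<times> Act \<longleftrightarrow> q \<in> (DeltaT - E0) \<times> {1}"
      using q E0(1) by (auto simp: Act_def)
  qed (auto intro!: ms[OF E0D] simp: Act_def)
  also have "\<dots> \<le> measure \<kappa> (DeltaT \<times> {1})"
    by (rule finite_measure_mono) (auto simp: Act_def intro!: ms[OF DT])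
  finally show "1 - measure (\<tau> t) E0 \<le> measure \<kappa> (DeltaT \<times> {1})" .
qed



lemma DT1_sets[measurable]: "DeltaT \<times> {1} \<in> sets (DTA :: ('a::topological_space measure \<times> real) measure)"
  unfolding DTA_def by (intro pair_measureI DeltaT_sets) (auto simp: Act_def)

lemma valid_props:
  fixes \<sigma> :: "'t::metric_space \<Rightarrow> real" and \<tau> :: "'t \<Rightarrow> 't measure measure"
  assumes ts: "type_space \<sigma> \<tau>"
    and HSb: "\<forall>\<gamma>\<in>DeltaT. S \<gamma> \<subseteq> Act"
    and E1: "E1 = {\<gamma> \<in> DeltaT. 1 \<in> S \<gamma>}" "E1 \<in> sets (prob_algebra borel)"
    and E0: "E0 = {\<gamma> \<in> DeltaT. 0 \<in> S \<gamma>}" "E0 \<in> sets (prob_algebra borel)"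
    and mu: "\<mu> \<in> space (prob_algebra (borel \<Otimes>\<^sub>M prob_algebra DTA))"
    and marg: "distr \<mu> borel fst = \<beta>"
    and ae: "AE p in \<mu>. snd p \<in> Dset \<tau> S (fst p)"
  shows "(\<integral>p. payoff 1 (\<sigma> (fst p)) (measure (snd p) (DeltaT \<times> {1})) \<partial>\<mu>)
           = xb \<sigma> \<beta> + (\<integral>p. measure (snd p) (DeltaT \<times> {1}) \<partial>\<mu>) - 1"
    and "(\<integral>p. payoff 0 (\<sigma> (fst p)) (measure (snd p) (DeltaT \<times> {1})) \<partial>\<mu>) = 0"
    and "(\<integral>p. measure (snd p) (DeltaT \<times> {1}) \<partial>\<mu>) \<le> Fb \<tau> \<beta> E1"
    and "1 - Fb \<tau> \<beta> E0 \<le> (\<integral>p. measure (snd p) (DeltaT \<times> {1}) \<partial>\<mu>)"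
proof -
  note D = type_spaceD[OF ts]
  have ps: "prob_space \<mu>" and s\<mu>: "sets \<mu> = sets (borel \<Otimes>\<^sub>M prob_algebra (DTA :: ('t measure \<times> real) measure))"
    using mu by (auto simp: space_prob_algebra)
  interpret prob_space \<mu> by (rule ps)
  note [measurable_cong] = s\<mu>
  have [measurable]: "\<tau> \<in> borel \<rightarrow>\<^sub>M prob_algebra (prob_algebra borel)" by (rule tau_meas[OF ts])
  have [measurable]: "\<sigma> \<in> borel_measurable borel" by (rule borel_measurable_continuous_onI[OF D(2)])
  note [measurable] = E1(2) E0(2)
  have mm: "(\<lambda>p. measure (snd p) (DeltaT \<times> {1})) \<in> borel_measurable \<mu>" by measurable
  have ms: "(\<lambda>p. \<sigma> (fst p)) \<in> borel_measurable \<mu>" by measurable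
  have mt1: "(\<lambda>p. measure (\<tau> (fst p)) E1) \<in> borel_measurable \<mu>" by measurable
  have mt0: "(\<lambda>p. measure (\<tau> (fst p)) E0) \<in> borel_measurable \<mu>" by measurable
  have fm: "fst \<in> \<mu> \<rightarrow>\<^sub>M borel" by measurable
  have bnd_snd: "measure (snd p) X \<in> {0..1}" if "p \<in> space \<mu>" for p X
  proof -
    have "p \<in> space (borel \<Otimes>\<^sub>M prob_algebra (DTA :: ('t measure \<times> real) measure))"
      using that sets_eq_imp_space_eq[OF s\<mu>] by simp
    then have "snd p \<in> space (prob_algebra DTA)" unfolding space_pair_measure by (cases p) simp
    then have "prob_space (snd p)" by (auto simp: space_prob_algebra)
    then show ?thesis using prob_space.prob_le_1[of "snd p" X] by simp
  qed
  have bnd_tau: "measure (\<tau> t) X \<in> {0..1}" for t X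
  proof -
    have "prob_space (\<tau> t)" using D(4)[of t] by (simp add: space_prob_algebra)
    then show ?thesis using prob_space.prob_le_1[of "\<tau> t" X] by simp
  qed
  have i_m: "integrable \<mu> (\<lambda>p. measure (snd p) (DeltaT \<times> {1}))"
  proof (rule integrable_const_bound[where B=1])
    show "AE p in \<mu>. norm (measure (snd p) (DeltaT \<times> {1})) \<le> 1"
      by (rule AE_I2) (use bnd_snd in fastforce)
  qed (rule mm)
  have i_s: "integrable \<mu> (\<lambda>p. \<sigma> (fst p))"
  proof (rule integrable_const_bound[where B=2])
    have "\<bar>\<sigma> t\<bar> \<le> 2" for t using D(3)[of t] by auto
    then show "AE p in \<mu>. norm (\<sigma> (fst p)) \<le> 2" by simp
  qed (rule ms)
  have i_t1: "integrable \<mu> (\<lambda>p. measure (\<tau> (fst p)) E1)"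
  proof (rule integrable_const_bound[where B=1])
    show "AE p in \<mu>. norm (measure (\<tau> (fst p)) E1) \<le> 1"
      by (rule AE_I2) (use bnd_tau in fastforce)
  qed (rule mt1)
  have i_t0: "integrable \<mu> (\<lambda>p. measure (\<tau> (fst p)) E0)"
  proof (rule integrable_const_bound[where B=1])
    show "AE p in \<mu>. norm (measure (\<tau> (fst p)) E0) \<le> 1"
      by (rule AE_I2) (use bnd_tau in fastforce)
  qed (rule mt0)
  have xs: "(\<integral>p. \<sigma> (fst p) \<partial>\<mu>) = xb \<sigma> \<beta>"
    unfolding xb_def marg[symmetric] by (rule integral_distr[OF fm, symmetric]) measurable
  have F1: "(\<integral>p. measure (\<tau> (fst p)) E1 \<partial>\<mu>) = Fb \<tau> \<beta> E1"
    unfolding Fb_def marg[symmetric] by (rule integral_distr[OF fm, symmetric]) measurable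
  have F0: "(\<integral>p. measure (\<tau> (fst p)) E0 \<partial>\<mu>) = Fb \<tau> \<beta> E0"
    unfolding Fb_def marg[symmetric] by (rule integral_distr[OF fm, symmetric]) measurable
  show "(\<integral>p. payoff 1 (\<sigma> (fst p)) (measure (snd p) (DeltaT \<times> {1})) \<partial>\<mu>)
           = xb \<sigma> \<beta> + (\<integral>p. measure (snd p) (DeltaT \<times> {1}) \<partial>\<mu>) - 1"
    unfolding payoff_def using i_m i_s xs by (simp add: prob_space)
  show "(\<integral>p. payoff 0 (\<sigma> (fst p)) (measure (snd p) (DeltaT \<times> {1})) \<partial>\<mu>) = 0"
    unfolding payoff_def by simp
  have "(\<integral>p. measure (snd p) (DeltaT \<times> {1}) \<partial>\<mu>) \<le> (\<integral>p. measure (\<tau> (fst p)) E1 \<partial>\<mu>)"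
    by (rule integral_mono_AE[OF i_m i_t1 eventually_mono[OF ae]])
       (rule kappa_bounds(1)[OF ts HSb E1 E0], auto)
  then show "(\<integral>p. measure (snd p) (DeltaT \<times> {1}) \<partial>\<mu>) \<le> Fb \<tau> \<beta> E1" using F1 by simp
  have "(\<integral>p. 1 - measure (\<tau> (fst p)) E0 \<partial>\<mu>) \<le> (\<integral>p. measure (snd p) (DeltaT \<times> {1}) \<partial>\<mu>)"
    by (rule integral_mono_AE[OF _ i_m eventually_mono[OF ae]])
       (use i_t0 in simp, rule kappa_bounds(2)[OF ts HSb E1 E0], auto)
  moreover have "(\<integral>p. 1 - measure (\<tau> (fst p)) E0 \<partial>\<mu>) = 1 - Fb \<tau> \<beta> E0"
    using i_t0 F0 by (simp add: prob_space)
  ultimately show "1 - Fb \<tau> \<beta> E0 \<le> (\<integral>p. measure (snd p) (DeltaT \<times> {1}) \<partial>\<mu>)" by simp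
qed



lemma Y_sets:
  fixes S :: "'t::metric_space measure \<Rightarrow> real set"
  assumes HSb: "\<forall>\<gamma>\<in>DeltaT. S \<gamma> \<subseteq> Act"
    and E1: "E1 = {\<gamma> \<in> DeltaT. 1 \<in> S \<gamma>}" "E1 \<in> sets (prob_algebra borel)"
    and E0: "E0 = {\<gamma> \<in> DeltaT. 0 \<in> S \<gamma>}" "E0 \<in> sets (prob_algebra borel)"
  shows "{q \<in> space (DTA :: ('t measure \<times> real) measure). snd q \<in> S (fst q)} \<in> sets DTA"
proof -
  have "{q \<in> space (DTA :: ('t measure \<times> real) measure). snd q \<in> S (fst q)} = E1 \<times> {1} \<union> E0 \<times> {0}"
  proof (intro set_eqI iffI)
    fix q :: "'t measure \<times> real"
    assume "q \<in> {q \<in> space DTA. snd q \<in> S (fst q)}"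
    then have "fst q \<in> DeltaT" "snd q \<in> Act" "snd q \<in> S (fst q)" by (auto simp: space_DTA mem_Times_iff)
    then show "q \<in> E1 \<times> {1} \<union> E0 \<times> {0}" unfolding E1(1) E0(1) Act_def by (cases q) auto
  next
    fix q :: "'t measure \<times> real"
    assume "q \<in> E1 \<times> {1} \<union> E0 \<times> {0}"
    then show "q \<in> {q \<in> space DTA. snd q \<in> S (fst q)}"
      unfolding E1(1) E0(1) by (auto simp: space_DTA Act_def)
  qed
  also have "\<dots> \<in> sets DTA" unfolding DTA_def using E1(2) E0(2) by (intro sets.Un pair_measureI) (auto simp: Act_def)
  finally show ?thesis .
qed

lemma construct:
  fixes \<sigma> :: "'t::metric_space \<Rightarrow> real" and \<tau> :: "'t \<Rightarrow> 't measure measure"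
  assumes ts: "type_space \<sigma> \<tau>" and beta: "\<beta> \<in> DeltaT"
    and HSb: "\<forall>\<gamma>\<in>DeltaT. S \<gamma> \<subseteq> Act"
    and E1: "E1 = {\<gamma> \<in> DeltaT. 1 \<in> S \<gamma>}" "E1 \<in> sets (prob_algebra borel)"
    and E0: "E0 = {\<gamma> \<in> DeltaT. 0 \<in> S \<gamma>}" "E0 \<in> sets (prob_algebra borel)"
    and h: "h \<in> prob_algebra (borel::'t measure) \<rightarrow>\<^sub>M count_space Act"
    and hS: "\<forall>\<gamma>\<in>DeltaT. h \<gamma> \<in> S \<gamma>"
  shows "\<exists>\<mu>. \<mu> \<in> space (prob_algebra (borel \<Otimes>\<^sub>M prob_algebra DTA)) \<and> distr \<mu> borel fst = \<beta> \<and>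
     (AE p in \<mu>. snd p \<in> Dset \<tau> S (fst p)) \<and>
     (\<integral>p. measure (snd p) (DeltaT \<times> {1}) \<partial>\<mu>) = Fb \<tau> \<beta> {\<gamma> \<in> DeltaT. h \<gamma> = 1}"
proof -
  note D = type_spaceD[OF ts]
  let ?P = "prob_algebra (borel::'t measure)"
  let ?N = "borel \<Otimes>\<^sub>M prob_algebra (DTA :: ('t measure \<times> real) measure)"
  have taum: "\<tau> \<in> borel \<rightarrow>\<^sub>M prob_algebra ?P" by (rule tau_meas[OF ts])
  have tp: "prob_space (\<tau> t)" "sets (\<tau> t) = sets ?P" for t
    using D(4)[of t] by (auto simp: space_prob_algebra)
  have spt: "space (\<tau> t) = DeltaT" for t using sets_eq_imp_space_eq[OF tp(2)] space_P by simp
  have bp: "prob_space \<beta>" "sets \<beta> = sets borel" using beta by (auto simp: DeltaT_iff)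
  define hp where "hp = (\<lambda>\<gamma>::'t measure. (\<gamma>, h \<gamma>))"
  have hpm: "hp \<in> ?P \<rightarrow>\<^sub>M DTA"
    unfolding hp_def DTA_def by (intro measurable_Pair measurable_id h)
  define \<kappa> where "\<kappa> = (\<lambda>t. distr (\<tau> t) DTA hp)"
  have km: "\<kappa> \<in> borel \<rightarrow>\<^sub>M prob_algebra DTA"
    unfolding \<kappa>_def using measurable_compose[OF taum measurable_distr_prob_space[OF hpm]] by simp
  define F where "F = (\<lambda>t. (t, \<kappa> t))"
  have Fm: "F \<in> borel \<rightarrow>\<^sub>M ?N" unfolding F_def by (intro measurable_Pair measurable_id km)
  define \<mu> where "\<mu> = distr \<beta> ?N F"
  have Fm': "F \<in> \<beta> \<rightarrow>\<^sub>M ?N" using Fm bp(2) by (simp cong: measurable_cong_sets)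
  have mu_sp: "\<mu> \<in> space (prob_algebra ?N)"
    unfolding \<mu>_def space_prob_algebra using prob_space.prob_space_distr[OF bp(1) Fm'] by simp
  have "distr \<mu> borel fst = distr \<beta> borel (fst \<circ> F)"
    unfolding \<mu>_def by (rule distr_distr[OF measurable_fst Fm'])
  also have "\<dots> = distr \<beta> borel (\<lambda>x. x)" unfolding F_def by (simp add: comp_def)
  also have "\<dots> = \<beta>" using bp(2) by (intro distr_id2) simp
  finally have marg: "distr \<mu> borel fst = \<beta>" .
  define Y where "Y = {q \<in> space (DTA :: ('t measure \<times> real) measure). snd q \<in> S (fst q)}"
  have Ym: "Y \<in> sets DTA" unfolding Y_def by (rule Y_sets[OF HSb E1 E0])
  have kD: "\<kappa> t \<in> space (prob_algebra DTA)" for t using measurable_space[OF km] by simp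
  have kP: "prob_space (\<kappa> t)" "sets (\<kappa> t) = sets DTA" for t using kD[of t] by (auto simp: space_prob_algebra)
  have spk: "space (\<kappa> t) = space DTA" for t using sets_eq_imp_space_eq[OF kP(2)] .
  have hpm': "hp \<in> \<tau> t \<rightarrow>\<^sub>M DTA" for t using hpm tp(2) by (simp cong: measurable_cong_sets)
  have kmarg: "distr (\<kappa> t) ?P fst = \<tau> t" for t
  proof -
    have "distr (\<kappa> t) ?P fst = distr (\<tau> t) ?P (fst \<circ> hp)"
      unfolding \<kappa>_def by (rule distr_distr[OF _ hpm']) (simp add: DTA_def)
    also have "\<dots> = distr (\<tau> t) ?P (\<lambda>x. x)" unfolding hp_def by (simp add: comp_def)
    also have "\<dots> = \<tau> t" using tp(2) by (intro distr_id2) simp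
    finally show ?thesis .
  qed
  have kY: "measure (\<kappa> t) Y = 1" for t
  proof -
    have "hp -` Y \<inter> space (\<tau> t) = space (\<tau> t)"
      unfolding Y_def hp_def spt using hS h[THEN measurable_space] by (auto simp: space_DTA space_P)
    then show ?thesis unfolding \<kappa>_def using measure_distr[OF hpm' Ym] prob_space.prob_space[OF tp(1)] by simp
  qed
  have Dk: "snd p \<in> Dset \<tau> S (fst p)" if "p \<in> space ?N" "distr (snd p) ?P fst = \<tau> (fst p)" "measure (snd p) Y = 1" for p
  proof -
    have sp: "snd p \<in> space (prob_algebra DTA)" using that(1) unfolding space_pair_measure by (cases p) simp
    then have pp: "prob_space (snd p)" "sets (snd p) = sets DTA" by (auto simp: space_prob_algebra)
    have spp: "space (snd p) = space DTA" using sets_eq_imp_space_eq[OF pp(2)] .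
    have "Y = {q \<in> space (snd p). snd q \<in> S (fst q)}" unfolding Y_def spp ..
    then have "AE q in snd p. snd q \<in> S (fst q)"
      using prob_space.prob_Collect_eq_1[OF pp(1), of "\<lambda>q. snd q \<in> S (fst q)"] that(3) Ym pp(2) by simp
    then show ?thesis unfolding Dset_def using sp that(2) by simp
  qed
  define Z where "Z = {p \<in> space ?N. distr (snd p) ?P fst = \<tau> (fst p)} \<inter> {p \<in> space ?N. measure (snd p) Y = 1}"
  have Zm: "Z \<in> sets ?N"
  proof -
    have "(\<lambda>p. measure (snd p) Y) \<in> borel_measurable ?N"
      by (rule measurable_compose[OF measurable_snd measurable_measure_prob_algebra[OF Ym]])
    then have "{p \<in> space ?N. measure (snd p) Y = 1} \<in> sets ?N"
      by (intro measurable_equality_set) auto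
    then show ?thesis unfolding Z_def using graph_tau_sets[OF ts] by auto
  qed
  have "AE p in \<mu>. p \<in> Z"
    unfolding \<mu>_def
  proof (subst AE_distr_iff[OF Fm'])
    show "{x \<in> space ?N. x \<in> Z} \<in> sets ?N" using Zm sets.sets_into_space[OF Zm] by (simp add: Int_absorb1 Collect_conj_eq Int_commute) 
    show "AE x in \<beta>. F x \<in> Z"
      by (rule AE_I2) (use measurable_space[OF Fm] kmarg kY in \<open>auto simp: Z_def F_def\<close>)
  qed
  then have ae: "AE p in \<mu>. snd p \<in> Dset \<tau> S (fst p)"
    by (rule eventually_mono) (use Dk in \<open>auto simp: Z_def\<close>)
  have "(\<integral>p. measure (snd p) (DeltaT \<times> {1}) \<partial>\<mu>) = (\<integral>t. measure (snd (F t)) (DeltaT \<times> {1}) \<partial>\<beta>)"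
    unfolding \<mu>_def by (rule integral_distr[OF Fm']) measurable
  also have "\<dots> = Fb \<tau> \<beta> {\<gamma> \<in> DeltaT. h \<gamma> = 1}"
    unfolding Fb_def
  proof (rule Bochner_Integration.integral_cong[OF refl])
    fix t
    have "measure (snd (F t)) (DeltaT \<times> {1}) = measure (\<tau> t) (hp -` (DeltaT \<times> {1}) \<inter> space (\<tau> t))"
      unfolding F_def \<kappa>_def by (simp add: measure_distr[OF hpm' DT1_sets])
    also have "hp -` (DeltaT \<times> {1}) \<inter> space (\<tau> t) = {\<gamma> \<in> DeltaT. h \<gamma> = 1}"
      unfolding hp_def spt by auto
    finally show "measure (snd (F t)) (DeltaT \<times> {1}) = measure (\<tau> t) {\<gamma> \<in> DeltaT. h \<gamma> = 1}" .
  qed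
  finally show ?thesis using mu_sp marg ae by blast
qed



lemma Fb_facts:
  fixes \<sigma> :: "'t::metric_space \<Rightarrow> real" and \<tau> :: "'t \<Rightarrow> 't measure measure"
  assumes ts: "type_space \<sigma> \<tau>" and beta: "\<beta> \<in> DeltaT"
    and E: "E \<in> sets (prob_algebra borel)"
  shows "integrable \<beta> (\<lambda>t. measure (\<tau> t) E)"
    and "Fb \<tau> \<beta> (DeltaT - E) = 1 - Fb \<tau> \<beta> E"
proof -
  note D = type_spaceD[OF ts]
  have bp: "prob_space \<beta>" "sets \<beta> = sets borel" using beta by (auto simp: DeltaT_iff)
  interpret prob_space \<beta> by (rule bp(1))
  have tp: "prob_space (\<tau> t)" "sets (\<tau> t) = sets (prob_algebra borel)" for t
    using D(4)[of t] by (auto simp: space_prob_algebra)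
  have spt: "space (\<tau> t) = DeltaT" for t using sets_eq_imp_space_eq[OF tp(2)] space_P by simp
  have m: "(\<lambda>t. measure (\<tau> t) X) \<in> borel_measurable \<beta>" if "X \<in> sets (prob_algebra borel)" for X
    using measurable_compose[OF tau_meas[OF ts] measurable_measure_prob_algebra[OF that]] bp(2)
    by (simp cong: measurable_cong_sets)
  have i: "integrable \<beta> (\<lambda>t. measure (\<tau> t) X)" if "X \<in> sets (prob_algebra borel)" for X
  proof (rule integrable_const_bound[where B=1])
    show "AE t in \<beta>. norm (measure (\<tau> t) X) \<le> 1"
      by (rule AE_I2) (use prob_space.prob_le_1[OF tp(1)] in simp)
  qed (rule m[OF that])
  show "integrable \<beta> (\<lambda>t. measure (\<tau> t) E)" by (rule i[OF E])
  have c: "measure (\<tau> t) (DeltaT - E) = 1 - measure (\<tau> t) E" for t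
    using prob_space.prob_compl[OF tp(1), of E] E tp(2) spt by simp
  show "Fb \<tau> \<beta> (DeltaT - E) = 1 - Fb \<tau> \<beta> E"
    unfolding Fb_def c using i[OF E] by (simp add: prob_space)
qed

lemma Fb_mono:
  fixes \<sigma> :: "'t::metric_space \<Rightarrow> real" and \<tau> :: "'t \<Rightarrow> 't measure measure"
  assumes ts: "type_space \<sigma> \<tau>" and beta: "\<beta> \<in> DeltaT"
    and E: "E \<in> sets (prob_algebra borel)" "E' \<in> sets (prob_algebra borel)" "E \<subseteq> E'"
  shows "Fb \<tau> \<beta> E \<le> Fb \<tau> \<beta> E'"
proof -
  note D = type_spaceD[OF ts]
  have tp: "prob_space (\<tau> t)" "sets (\<tau> t) = sets (prob_algebra borel)" for t
    using D(4)[of t] by (auto simp: space_prob_algebra)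
  show ?thesis unfolding Fb_def
    by (rule integral_mono[OF Fb_facts(1)[OF ts beta E(1)] Fb_facts(1)[OF ts beta E(2)]])
       (use finite_measure.finite_measure_mono[OF prob_space.finite_measure[OF tp(1)] E(3)] E(2) tp(2) in auto)
qed

lemma char:
  fixes \<sigma> :: "'t::metric_space \<Rightarrow> real" and \<tau> :: "'t \<Rightarrow> 't measure measure"
  assumes ts: "type_space \<sigma> \<tau>" and beta: "\<beta> \<in> DeltaT"
    and HSb: "\<forall>\<gamma>\<in>DeltaT. S \<gamma> \<subseteq> Act"
    and HS2: "\<forall>\<gamma>\<in>DeltaT. S \<gamma> \<noteq> {}"
    and E1: "E1 = {\<gamma> \<in> DeltaT. 1 \<in> S \<gamma>}" "E1 \<in> sets (prob_algebra borel)"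
    and E0: "E0 = {\<gamma> \<in> DeltaT. 0 \<in> S \<gamma>}" "E0 \<in> sets (prob_algebra borel)"
  shows "1 \<in> Sstep \<sigma> \<tau> S \<beta> \<longleftrightarrow> 1 - xb \<sigma> \<beta> \<le> Fb \<tau> \<beta> E1"
    and "0 \<in> Sstep \<sigma> \<tau> S \<beta> \<longleftrightarrow> xb \<sigma> \<beta> \<le> Fb \<tau> \<beta> E0"
proof -
  have A: "1 \<in> Act" "0 \<in> Act" by (auto simp: Act_def)
  have DT: "DeltaT \<in> sets (prob_algebra (borel::'t measure))" by (rule DeltaT_sets)
  note VP = valid_props[OF ts HSb E1 E0]
  show "1 \<in> Sstep \<sigma> \<tau> S \<beta> \<longleftrightarrow> 1 - xb \<sigma> \<beta> \<le> Fb \<tau> \<beta> E1"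
  proof
    assume "1 \<in> Sstep \<sigma> \<tau> S \<beta>"
    then obtain \<mu> where mu: "\<mu> \<in> space (prob_algebra (borel \<Otimes>\<^sub>M prob_algebra DTA))"
      "distr \<mu> borel fst = \<beta>" "AE p in \<mu>. snd p \<in> Dset \<tau> S (fst p)"
      "(\<integral>p. payoff 0 (\<sigma> (fst p)) (measure (snd p) (DeltaT \<times> {1})) \<partial>\<mu>)
        \<le> (\<integral>p. payoff 1 (\<sigma> (fst p)) (measure (snd p) (DeltaT \<times> {1})) \<partial>\<mu>)"
      unfolding Sstep_def using A by blast
    then show "1 - xb \<sigma> \<beta> \<le> Fb \<tau> \<beta> E1"
      using VP(1-3)[OF mu(1-3)] by linarith
  next
    assume a: "1 - xb \<sigma> \<beta> \<le> Fb \<tau> \<beta> E1"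
    define h where "h = (\<lambda>\<gamma>::'t measure. if \<gamma> \<in> E1 then (1::real) else 0)"
    have hm: "h \<in> prob_algebra (borel::'t measure) \<rightarrow>\<^sub>M count_space Act"
      unfolding h_def using E1(2) A by (intro measurable_If_set measurable_const) auto
    have hS: "\<forall>\<gamma>\<in>DeltaT. h \<gamma> \<in> S \<gamma>"
    proof (intro ballI)
      fix \<gamma> :: "'t measure" assume that: "\<gamma> \<in> DeltaT"
      show "h \<gamma> \<in> S \<gamma>"
    proof (cases "\<gamma> \<in> E1")
      case False
      then have "1 \<notin> S \<gamma>" using that E1(1) by auto
      moreover have "S \<gamma> \<subseteq> {0, 1}" "S \<gamma> \<noteq> {}" using HSb HS2 that by (auto simp: Act_def)
      ultimately have "0 \<in> S \<gamma>" by auto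
      then show ?thesis using False by (simp add: h_def)
    qed (use E1(1) in \<open>simp add: h_def\<close>)
    qed
    have hE: "{\<gamma> \<in> DeltaT. h \<gamma> = 1} = E1" unfolding h_def E1(1) by auto
    obtain \<mu> where mu: "\<mu> \<in> space (prob_algebra (borel \<Otimes>\<^sub>M prob_algebra DTA))"
      "distr \<mu> borel fst = \<beta>" "AE p in \<mu>. snd p \<in> Dset \<tau> S (fst p)"
      "(\<integral>p. measure (snd p) (DeltaT \<times> {1}) \<partial>\<mu>) = Fb \<tau> \<beta> E1"
      using construct[OF ts beta HSb E1 E0 hm hS] unfolding hE by blast
    have "\<forall>a'\<in>Act. (\<integral>p. payoff a' (\<sigma> (fst p)) (measure (snd p) (DeltaT \<times> {1})) \<partial>\<mu>)
        \<le> (\<integral>p. payoff 1 (\<sigma> (fst p)) (measure (snd p) (DeltaT \<times> {1})) \<partial>\<mu>)"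
      using VP(1,2)[OF mu(1-3)] mu(4) a by (auto simp: Act_def)
    then show "1 \<in> Sstep \<sigma> \<tau> S \<beta>" unfolding Sstep_def using A mu(1-3) by blast
  qed
  show "0 \<in> Sstep \<sigma> \<tau> S \<beta> \<longleftrightarrow> xb \<sigma> \<beta> \<le> Fb \<tau> \<beta> E0"
  proof
    assume "0 \<in> Sstep \<sigma> \<tau> S \<beta>"
    then obtain \<mu> where mu: "\<mu> \<in> space (prob_algebra (borel \<Otimes>\<^sub>M prob_algebra DTA))"
      "distr \<mu> borel fst = \<beta>" "AE p in \<mu>. snd p \<in> Dset \<tau> S (fst p)"
      "(\<integral>p. payoff 1 (\<sigma> (fst p)) (measure (snd p) (DeltaT \<times> {1})) \<partial>\<mu>)
        \<le> (\<integral>p. payoff 0 (\<sigma> (fst p)) (measure (snd p) (DeltaT \<times> {1})) \<partial>\<mu>)"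
      unfolding Sstep_def using A by blast
    then show "xb \<sigma> \<beta> \<le> Fb \<tau> \<beta> E0"
      using VP(1,2,4)[OF mu(1-3)] by linarith
  next
    assume a: "xb \<sigma> \<beta> \<le> Fb \<tau> \<beta> E0"
    define h where "h = (\<lambda>\<gamma>::'t measure. if \<gamma> \<in> E0 then (0::real) else 1)"
    have hm: "h \<in> prob_algebra (borel::'t measure) \<rightarrow>\<^sub>M count_space Act"
      unfolding h_def using E0(2) A by (intro measurable_If_set measurable_const) auto
    have hS: "\<forall>\<gamma>\<in>DeltaT. h \<gamma> \<in> S \<gamma>"
    proof (intro ballI)
      fix \<gamma> :: "'t measure" assume that: "\<gamma> \<in> DeltaT"
      show "h \<gamma> \<in> S \<gamma>"
    proof (cases "\<gamma> \<in> E0")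
      case False
      then have "0 \<notin> S \<gamma>" using that E0(1) by auto
      moreover have "S \<gamma> \<subseteq> {0, 1}" "S \<gamma> \<noteq> {}" using HSb HS2 that by (auto simp: Act_def)
      ultimately have "1 \<in> S \<gamma>" by auto
      then show ?thesis using False by (simp add: h_def)
    qed (use E0(1) in \<open>simp add: h_def\<close>)
    qed
    have hE: "{\<gamma> \<in> DeltaT. h \<gamma> = 1} = DeltaT - E0" unfolding h_def by auto
    obtain \<mu> where mu: "\<mu> \<in> space (prob_algebra (borel \<Otimes>\<^sub>M prob_algebra DTA))"
      "distr \<mu> borel fst = \<beta>" "AE p in \<mu>. snd p \<in> Dset \<tau> S (fst p)"
      "(\<integral>p. measure (snd p) (DeltaT \<times> {1}) \<partial>\<mu>) = 1 - Fb \<tau> \<beta> E0"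
      using construct[OF ts beta HSb E1 E0 hm hS] unfolding hE Fb_facts(2)[OF ts beta E0(2)] by blast
    have "\<forall>a'\<in>Act. (\<integral>p. payoff a' (\<sigma> (fst p)) (measure (snd p) (DeltaT \<times> {1})) \<partial>\<mu>)
        \<le> (\<integral>p. payoff 0 (\<sigma> (fst p)) (measure (snd p) (DeltaT \<times> {1})) \<partial>\<mu>)"
      using VP(1,2)[OF mu(1-3)] mu(4) a by (auto simp: Act_def)
    then show "0 \<in> Sstep \<sigma> \<tau> S \<beta>" unfolding Sstep_def using A mu(1-3) by blast
  qed
qed



lemma Sstep_mono:
  assumes "\<And>\<gamma>. S \<gamma> \<subseteq> S' \<gamma>"
  shows "Sstep \<sigma> \<tau> S \<beta> \<subseteq> Sstep \<sigma> \<tau> S' \<beta>"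
proof -
  have "Dset \<tau> S t \<subseteq> Dset \<tau> S' t" for t
    unfolding Dset_def using assms by (auto elim!: eventually_mono)
  then show ?thesis unfolding Sstep_def by (fastforce elim!: eventually_mono)
qed

lemma Sm_Act: "Sm \<sigma> \<tau> m \<gamma> \<subseteq> Act"
  by (cases m) (auto simp: Sstep_def)

lemma Sm_dec: "Sm \<sigma> \<tau> (Suc m) \<gamma> \<subseteq> Sm \<sigma> \<tau> m \<gamma>"
proof (induction m arbitrary: \<gamma>)
  case 0 then show ?case by (auto simp: Sstep_def)
next
  case (Suc m)
  then show ?case by (simp add: Sstep_mono)
qed

lemma Sm_antimono: "k \<le> m \<Longrightarrow> Sm \<sigma> \<tau> m \<gamma> \<subseteq> Sm \<sigma> \<tau> k \<gamma>"
proof (induction m rule: dec_induct)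
  case base then show ?case by simp
next
  case (step m) then show ?case using Sm_dec[of \<sigma> \<tau> m \<gamma>] by blast
qed

lemma Fb_meas:
  fixes \<sigma> :: "'t::metric_space \<Rightarrow> real" and \<tau> :: "'t \<Rightarrow> 't measure measure"
  assumes ts: "type_space \<sigma> \<tau>" and E: "E \<in> sets (prob_algebra borel)"
  shows "(\<lambda>\<gamma>. Fb \<tau> \<gamma> E) \<in> borel_measurable (prob_algebra borel)"
proof -
  have "(\<lambda>t. measure (\<tau> t) E) \<in> borel_measurable borel"
    by (rule measurable_compose[OF tau_meas[OF ts] measurable_measure_prob_algebra[OF E]])
  then show ?thesis unfolding Fb_def by (rule int_meas_prob)
qed

lemma xb_meas:
  fixes \<sigma> :: "'t::metric_space \<Rightarrow> real" and \<tau> :: "'t \<Rightarrow> 't measure measure"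
  assumes ts: "type_space \<sigma> \<tau>"
  shows "xb \<sigma> \<in> borel_measurable (prob_algebra borel)"
proof -
  have "\<sigma> \<in> borel_measurable borel" by (rule borel_measurable_continuous_onI[OF type_spaceD(2)[OF ts]])
  then show ?thesis unfolding xb_def[abs_def] by (rule int_meas_prob)
qed

lemma Bop_sets:
  fixes \<sigma> :: "'t::metric_space \<Rightarrow> real" and \<tau> :: "'t \<Rightarrow> 't measure measure"
  assumes ts: "type_space \<sigma> \<tau>" and E: "E \<in> sets (prob_algebra borel)"
    and f: "f \<in> borel_measurable (prob_algebra borel)"
  shows "Bop \<tau> f E \<in> sets (prob_algebra borel)"
proof -
  have m: "(\<lambda>\<gamma>. Fb \<tau> \<gamma> E) \<in> borel_measurable (prob_algebra borel)" by (rule Fb_meas[OF ts E])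
  have "Bop \<tau> f E = E \<inter> {\<gamma> \<in> space (prob_algebra borel). f \<gamma> \<le> Fb \<tau> \<gamma> E}"
    unfolding Bop_def using sets.sets_into_space[OF E] by auto
  also have "\<dots> \<in> sets (prob_algebra borel)"
    by (intro sets.Int[OF E] borel_measurable_le[OF f m])
  finally show ?thesis .
qed

lemma Bop_iter_sets:
  fixes \<sigma> :: "'t::metric_space \<Rightarrow> real" and \<tau> :: "'t \<Rightarrow> 't measure measure"
  assumes ts: "type_space \<sigma> \<tau>" and f: "f \<in> borel_measurable (prob_algebra borel)"
  shows "(Bop \<tau> f ^^ m) DeltaT \<in> sets (prob_algebra (borel::'t measure))"
  by (induction m) (auto intro: Bop_sets[OF ts _ f] DeltaT_sets)



lemma main_induct:
  fixes \<sigma> :: "'t::metric_space \<Rightarrow> real" and \<tau> :: "'t \<Rightarrow> 't measure measure"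
  assumes ts: "type_space \<sigma> \<tau>"
  shows "(\<forall>\<gamma>\<in>DeltaT. Sm \<sigma> \<tau> m \<gamma> \<noteq> {}) \<and>
         {\<gamma> \<in> DeltaT. 1 \<in> Sm \<sigma> \<tau> m \<gamma>} = (Bop \<tau> (\<lambda>\<gamma>. 1 - xb \<sigma> \<gamma>) ^^ m) DeltaT \<and>
         {\<gamma> \<in> DeltaT. 0 \<in> Sm \<sigma> \<tau> m \<gamma>} = (Bop \<tau> (xb \<sigma>) ^^ m) DeltaT"
proof (induction m)
  case 0
  then show ?case by (auto simp: Act_def)
next
  case (Suc m)
  let ?S = "Sm \<sigma> \<tau> m"
  let ?B1 = "Bop \<tau> (\<lambda>\<gamma>. 1 - xb \<sigma> \<gamma>)"
  let ?B0 = "Bop \<tau> (xb \<sigma>)"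
  define E1 where "E1 = {\<gamma> \<in> DeltaT. 1 \<in> ?S \<gamma>}"
  define E0 where "E0 = {\<gamma> \<in> DeltaT. 0 \<in> ?S \<gamma>}"
  have xm: "xb \<sigma> \<in> borel_measurable (prob_algebra borel)" by (rule xb_meas[OF ts])
  have xm1: "(\<lambda>\<gamma>. 1 - xb \<sigma> \<gamma>) \<in> borel_measurable (prob_algebra borel)" using xm by measurable
  have E1eq: "E1 = (?B1 ^^ m) DeltaT" using Suc.IH unfolding E1_def by blast
  have E0eq: "E0 = (?B0 ^^ m) DeltaT" using Suc.IH unfolding E0_def by blast
  have E1m: "E1 \<in> sets (prob_algebra borel)" unfolding E1eq by (rule Bop_iter_sets[OF ts xm1])
  have E0m: "E0 \<in> sets (prob_algebra borel)" unfolding E0eq by (rule Bop_iter_sets[OF ts xm])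
  have HSb: "\<forall>\<gamma>\<in>DeltaT. ?S \<gamma> \<subseteq> Act" using Sm_Act by blast
  have HS2: "\<forall>\<gamma>\<in>DeltaT. ?S \<gamma> \<noteq> {}" using Suc.IH by blast
  have c1: "1 \<in> Sm \<sigma> \<tau> (Suc m) \<beta> \<longleftrightarrow> 1 - xb \<sigma> \<beta> \<le> Fb \<tau> \<beta> E1" if "\<beta> \<in> DeltaT" for \<beta>
    using char(1)[OF ts that HSb HS2 E1_def E1m E0_def E0m] by simp
  have c0: "0 \<in> Sm \<sigma> \<tau> (Suc m) \<beta> \<longleftrightarrow> xb \<sigma> \<beta> \<le> Fb \<tau> \<beta> E0" if "\<beta> \<in> DeltaT" for \<beta>
    using char(2)[OF ts that HSb HS2 E1_def E1m E0_def E0m] by simp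
  have "{\<gamma> \<in> DeltaT. 1 \<in> Sm \<sigma> \<tau> (Suc m) \<gamma>} = ?B1 E1"
    unfolding Bop_def using c1 Sm_dec[of \<sigma> \<tau> m] unfolding E1_def by auto
  moreover have "{\<gamma> \<in> DeltaT. 0 \<in> Sm \<sigma> \<tau> (Suc m) \<gamma>} = ?B0 E0"
    unfolding Bop_def using c0 Sm_dec[of \<sigma> \<tau> m] unfolding E0_def by auto
  moreover have "Sm \<sigma> \<tau> (Suc m) \<beta> \<noteq> {}" if b: "\<beta> \<in> DeltaT" for \<beta>
  proof (cases "1 - xb \<sigma> \<beta> \<le> Fb \<tau> \<beta> E1")
    case True then show ?thesis using c1[OF b] by auto
  next
    case False
    have sub: "DeltaT - E0 \<subseteq> E1"
    proof
      fix \<gamma> assume g: "\<gamma> \<in> DeltaT - E0"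
      then have "?S \<gamma> \<subseteq> {0,1}" "?S \<gamma> \<noteq> {}" "0 \<notin> ?S \<gamma>"
        using HSb HS2 unfolding E0_def Act_def by auto
      then have "1 \<in> ?S \<gamma>" by auto
      then show "\<gamma> \<in> E1" using g unfolding E1_def by auto
    qed
    have "Fb \<tau> \<beta> (DeltaT - E0) \<le> Fb \<tau> \<beta> E1"
      by (rule Fb_mono[OF ts b _ E1m sub]) (use E0m DeltaT_sets in auto)
    then have "1 - Fb \<tau> \<beta> E0 \<le> Fb \<tau> \<beta> E1" using Fb_facts(2)[OF ts b E0m] by simp
    then have "xb \<sigma> \<beta> \<le> Fb \<tau> \<beta> E0" using False by simp
    then show ?thesis using c0[OF b] by auto
  qed
  ultimately show ?case unfolding E1eq E0eq by simp
qed

theorem lemma3: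
  fixes \<sigma> :: "'t::metric_space \<Rightarrow> real" and \<tau> :: "'t \<Rightarrow> 't measure measure"
  assumes "type_space \<sigma> \<tau>"
    and "\<beta> \<in> DeltaT"
  shows "(Max (Srat \<sigma> \<tau> \<beta>) = 1 \<longleftrightarrow> \<beta> \<in> Cop \<tau> (\<lambda>\<gamma>. 1 - xb \<sigma> \<gamma>) DeltaT)
       \<and> (Min (Srat \<sigma> \<tau> \<beta>) = 0 \<longleftrightarrow> \<beta> \<in> Cop \<tau> (xb \<sigma>) DeltaT)"
proof -
  note MI = main_induct[OF assms(1)]
  have ne: "Sm \<sigma> \<tau> m \<beta> \<noteq> {}" for m using MI[of m] assms(2) by blast
  have sub: "Srat \<sigma> \<tau> \<beta> \<subseteq> {0, 1}"
  proof -
    have "Srat \<sigma> \<tau> \<beta> \<subseteq> Sm \<sigma> \<tau> 0 \<beta>" unfolding Srat_def by blast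
    then show ?thesis by (simp add: Act_def)
  qed
  have fin: "finite (Srat \<sigma> \<tau> \<beta>)" using sub finite_subset by blast
  have in1: "1 \<in> Srat \<sigma> \<tau> \<beta> \<longleftrightarrow> \<beta> \<in> Cop \<tau> (\<lambda>\<gamma>. 1 - xb \<sigma> \<gamma>) DeltaT"
  proof -
    have "1 \<in> Srat \<sigma> \<tau> \<beta> \<longleftrightarrow> (\<forall>m. 1 \<in> Sm \<sigma> \<tau> m \<beta>)" unfolding Srat_def by simp
    also have "\<dots> \<longleftrightarrow> (\<forall>m. \<beta> \<in> (Bop \<tau> (\<lambda>\<gamma>. 1 - xb \<sigma> \<gamma>) ^^ m) DeltaT)"
    proof -
      have "1 \<in> Sm \<sigma> \<tau> m \<beta> \<longleftrightarrow> \<beta> \<in> (Bop \<tau> (\<lambda>\<gamma>. 1 - xb \<sigma> \<gamma>) ^^ m) DeltaT" for m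
      proof -
        have "1 \<in> Sm \<sigma> \<tau> m \<beta> \<longleftrightarrow> \<beta> \<in> {\<gamma> \<in> DeltaT. 1 \<in> Sm \<sigma> \<tau> m \<gamma>}" using assms(2) by simp
        also have "{\<gamma> \<in> DeltaT. 1 \<in> Sm \<sigma> \<tau> m \<gamma>} = (Bop \<tau> (\<lambda>\<gamma>. 1 - xb \<sigma> \<gamma>) ^^ m) DeltaT" using MI[of m] by simp
        finally show ?thesis .
      qed
      then show ?thesis by simp
    qed
    also have "\<dots> \<longleftrightarrow> \<beta> \<in> Cop \<tau> (\<lambda>\<gamma>. 1 - xb \<sigma> \<gamma>) DeltaT"
    proof
      assume "\<forall>m. \<beta> \<in> (Bop \<tau> (\<lambda>\<gamma>. 1 - xb \<sigma> \<gamma>) ^^ m) DeltaT"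
      then show "\<beta> \<in> Cop \<tau> (\<lambda>\<gamma>. 1 - xb \<sigma> \<gamma>) DeltaT" unfolding Cop_def by blast
    next
      assume "\<beta> \<in> Cop \<tau> (\<lambda>\<gamma>. 1 - xb \<sigma> \<gamma>) DeltaT"
      then have n: "\<beta> \<in> (Bop \<tau> (\<lambda>\<gamma>. 1 - xb \<sigma> \<gamma>) ^^ Suc n) DeltaT" for n unfolding Cop_def by blast
      show "\<forall>m. \<beta> \<in> (Bop \<tau> (\<lambda>\<gamma>. 1 - xb \<sigma> \<gamma>) ^^ m) DeltaT"
      proof
        fix m show "\<beta> \<in> (Bop \<tau> (\<lambda>\<gamma>. 1 - xb \<sigma> \<gamma>) ^^ m) DeltaT"
          using n assms(2) by (cases m) simp_all
      qed
    qed
    finally show ?thesis .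
  qed
  have in0: "0 \<in> Srat \<sigma> \<tau> \<beta> \<longleftrightarrow> \<beta> \<in> Cop \<tau> (xb \<sigma>) DeltaT"
  proof -
    have "0 \<in> Srat \<sigma> \<tau> \<beta> \<longleftrightarrow> (\<forall>m. 0 \<in> Sm \<sigma> \<tau> m \<beta>)" unfolding Srat_def by simp
    also have "\<dots> \<longleftrightarrow> (\<forall>m. \<beta> \<in> (Bop \<tau> (xb \<sigma>) ^^ m) DeltaT)"
    proof -
      have "0 \<in> Sm \<sigma> \<tau> m \<beta> \<longleftrightarrow> \<beta> \<in> (Bop \<tau> (xb \<sigma>) ^^ m) DeltaT" for m
      proof -
        have "0 \<in> Sm \<sigma> \<tau> m \<beta> \<longleftrightarrow> \<beta> \<in> {\<gamma> \<in> DeltaT. 0 \<in> Sm \<sigma> \<tau> m \<gamma>}" using assms(2) by simp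
        also have "{\<gamma> \<in> DeltaT. 0 \<in> Sm \<sigma> \<tau> m \<gamma>} = (Bop \<tau> (xb \<sigma>) ^^ m) DeltaT" using MI[of m] by simp
        finally show ?thesis .
      qed
      then show ?thesis by simp
    qed
    also have "\<dots> \<longleftrightarrow> \<beta> \<in> Cop \<tau> (xb \<sigma>) DeltaT"
    proof
      assume "\<forall>m. \<beta> \<in> (Bop \<tau> (xb \<sigma>) ^^ m) DeltaT"
      then show "\<beta> \<in> Cop \<tau> (xb \<sigma>) DeltaT" unfolding Cop_def by blast
    next
      assume "\<beta> \<in> Cop \<tau> (xb \<sigma>) DeltaT"
      then have n: "\<beta> \<in> (Bop \<tau> (xb \<sigma>) ^^ Suc n) DeltaT" for n unfolding Cop_def by blast
      show "\<forall>m. \<beta> \<in> (Bop \<tau> (xb \<sigma>) ^^ m) DeltaT"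
      proof
        fix m show "\<beta> \<in> (Bop \<tau> (xb \<sigma>) ^^ m) DeltaT"
          using n assms(2) by (cases m) simp_all
      qed
    qed
    finally show ?thesis .
  qed
  have nonempty: "Srat \<sigma> \<tau> \<beta> \<noteq> {}"
  proof (cases "1 \<in> Srat \<sigma> \<tau> \<beta>")
    case False
    then obtain m where m: "1 \<notin> Sm \<sigma> \<tau> m \<beta>" unfolding Srat_def by blast
    have "0 \<in> Sm \<sigma> \<tau> k \<beta>" for k
    proof (cases "k \<le> m")
      case True
      have "0 \<in> Sm \<sigma> \<tau> m \<beta>" using m ne[of m] Sm_Act[of \<sigma> \<tau> m \<beta>] by (auto simp: Act_def)
      then show ?thesis using Sm_antimono[OF True] by blast
    next
      case False
      then have "Sm \<sigma> \<tau> k \<beta> \<subseteq> Sm \<sigma> \<tau> m \<beta>" by (intro Sm_antimono) simp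
      then show ?thesis using m ne[of k] Sm_Act[of \<sigma> \<tau> k \<beta>] by (auto simp: Act_def)
    qed
    then show ?thesis unfolding Srat_def by blast
  qed blast
  have "Max (Srat \<sigma> \<tau> \<beta>) = 1 \<longleftrightarrow> 1 \<in> Srat \<sigma> \<tau> \<beta>"
  proof
    assume "Max (Srat \<sigma> \<tau> \<beta>) = 1"
    then show "1 \<in> Srat \<sigma> \<tau> \<beta>" using Max_in[OF fin nonempty] by simp
  next
    assume a: "1 \<in> Srat \<sigma> \<tau> \<beta>"
    have "Max (Srat \<sigma> \<tau> \<beta>) \<le> 1" using Max_in[OF fin nonempty] sub by auto
    moreover have "1 \<le> Max (Srat \<sigma> \<tau> \<beta>)" using Max_ge[OF fin a] .
    ultimately show "Max (Srat \<sigma> \<tau> \<beta>) = 1" by simp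
  qed
  moreover have "Min (Srat \<sigma> \<tau> \<beta>) = 0 \<longleftrightarrow> 0 \<in> Srat \<sigma> \<tau> \<beta>"
  proof
    assume "Min (Srat \<sigma> \<tau> \<beta>) = 0"
    then show "0 \<in> Srat \<sigma> \<tau> \<beta>" using Min_in[OF fin nonempty] by simp
  next
    assume a: "0 \<in> Srat \<sigma> \<tau> \<beta>"
    have "0 \<le> Min (Srat \<sigma> \<tau> \<beta>)" using Min_in[OF fin nonempty] sub by auto
    moreover have "Min (Srat \<sigma> \<tau> \<beta>) \<le> 0" using Min_le[OF fin a] .
    ultimately show "Min (Srat \<sigma> \<tau> \<beta>) = 0" by simp
  qed
  ultimately show ?thesis using in1 in0 by simp
qed


end
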